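(* Consider the MPC closed-loop system described in the context. Assume that $A$ is Schur stable, i.e. all eigenvalues of $A$ have modulus strictly less than $1$. Assume also that $\mathbb{E}\bigl[\bar\varphi(\bar F\bar w)\bigr]=0$ for every initial condition. Then the closed loop satisfies $$\sup_{t\in\mathbb{N}_0}\mathbb{E}_{x_0}\bigl[\|x_t\|^2\bigr]<\infty.$$
   Context: **System.** Consider the discrete-time system $x_{t+1}=Ax_t+Bu_t+Fw_t+r$ for $t\in\mathbb{N}_0$. The data are: - $x_t\in\mathbb{R}^n$, $u_t\in\mathbb{R}^m$ and $w_t\in\mathbb{R}^n$; - known matrices $A$, $B$, $F$ and a known vector $r$; - a given initial state $x_0$; - i.i.d. noise vectors $w_t$, possibly with unbounded support, with mean $\mu_w$ and finite covariance $\Sigma_w$; - the input constraint $\|u_t\|_\infty\le U_{\max}$, where $U_{\max}>0$. **Stacked notation.** Fix a horizon $N\in\mathbb{N}$. Define - $\bar x=(x_0^\mathsf{T},\dots,x_N^\mathsf{T})^\mathsf{T}$, $\bar u=(u_0^\mathsf{T},\dots,u_{N-1}^\mathsf{T})^\mathsf{T}$, $\bar w=(w_0^\mathsf{T},\dots,w_{N-1}^\mathsf{T})^\mathsf{T}$, and $\bar r=(r^\mathsf{T},\dots,r^\mathsf{T})^\mathsf{T}\in\mathbb{R}^{Nn}$; - $\bar F=\operatorname{diag}(F,\dots,F)$ and $\bar A=(I,A^\mathsf{T},\dots,(A^N)^\mathsf{T})^\mathsf{T}$; - $\bar B$ is the block matrix with blocks $A^{k-1-j}B$ for $j<k$ and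 $0$ otherwise ($k=0,\dots,N$, $j=0,\dots,N-1$); - $\bar D$ is the block matrix with blocks $A^{k-1-j}$ for $j<k$ and $0$ otherwise. Then $\bar x=\bar Ax_0+\bar B\bar u+\bar D\bar F\bar w+\bar D\bar r$. Let $Q_0,\dots,Q_N$ and $R_0,\dots,R_{N-1}$ be symmetric positive definite, and set $\bar Q=\operatorname{diag}(Q_0,\dots,Q_N)$ and $\bar R=\operatorname{diag}(R_0,\dots,R_{N-1})$. **Saturated noise measurements.** Let $0<\phi_{\max}\le U_{\max}$, and let $\varphi_i^j:\mathbb{R}\to\mathbb{R}$ ($i=0,\dots,N-1$, $j=1,\dots,n$) be functions bounded in absolute value by $\phi_{\max}$. Set $\varphi_i(Fw_i)=(\varphi_i^1(F_1w_i),\dots,\varphi_i^n(F_nw_i))^\mathsf{T}$, with $F_j$ the $j$-th row of $F$, and $\bar\varphi(\bar F\bar w)=(\varphi_0(Fw_0)^\mathsf{T},\dots,\varphi_{N-1}(Fw_{N-1})^\mathsf{T})^\mathsf{T}$. **Finite-horizon problem.** For a given initial state $x$, the finite-horizon problem is to minimize $\mathbb{E}_{x}[\bar x^\mathsf{T}\bar Q\bar x+\bar u^\mathsf{T}\bar R\bar u]$, with $x_0=x$, over policies $\bar u=\bar G\bar\varphi(\bar F\bar w)+\bar d$. Here $\bar d\in\mathbb{R}^{Nm}$, and $\bar G\in\mathbb{R}^{Nm\times Nn}$ is strictly block lower triangular with $m\times n$ blocks. The constraint is $|\bar d_i|+\|\bar G_i\|_1\phi_{\max}\le U_{\max}$ for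 $i=1,\dots,Nm$, where $\bar G_i$ is the $i$-th row of $\bar G$; equivalently, $\|\bar Gv+\bar d\|_\infty\le U_{\max}$ whenever $\|v\|_\infty\le\phi_{\max}$. **MPC closed loop.** At each time $t$, the finite-horizon problem is solved with initial state $x_t$, giving an optimal solution $(\bar G^*,\bar d^* )$ that depends on $x_t$. Let $\bar d^*_{0|t}\in\mathbb{R}^m$ denote the first $m$ entries of $\bar d^*$. The control $u_t=\bar d^*_{0|t}$ is applied, so the closed loop is $$x_{t+1}=Ax_t+B\bar d^*_{0|t}+Fw_t+r,\qquad t\in\mathbb{N}_0.$$ *)

theory Defs
  imports "HOL-Probability.Probability"
begin

text \<open>Schur stability: every complex eigenvalue of the real matrix A has modulus < 1.\<close>
definition schur_stable :: "real^'n^'n \<Rightarrow> bool" where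
  "schur_stable A \<longleftrightarrow>
     (\<forall>(c::complex) (v::complex^'n). v \<noteq> 0 \<and>
        (\<chi> i j. complex_of_real (A$i$j)) *v v = c *s v \<longrightarrow> cmod c < 1)"

text \<open>Symmetric positive definite matrix.\<close>
definition sym_pos_def :: "real^'k^'k \<Rightarrow> bool" where
  "sym_pos_def Q \<longleftrightarrow> transpose Q = Q \<and> (\<forall>v. v \<noteq> 0 \<longrightarrow> v \<bullet> (Q *v v) > 0)"

text \<open>Saturated measurement vector: phi_vec phi i y = (phi_i^j(y_j))_j, applied to y = F w_i.\<close>
definition phi_vec :: "(nat \<Rightarrow> 'n \<Rightarrow> real \<Rightarrow> real) \<Rightarrow> nat \<Rightarrow> real^'n \<Rightarrow> real^'n" where
  "phi_vec phi i y = (\<chi> j. phi i j (y $ j))"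

text \<open>Block k of u-bar = G-bar phi-bar(F-bar w-bar) + d-bar (G-bar strictly block lower triangular,
  block (k,j) is G k j for j<k).\<close>
definition fh_input ::
  "real^'n^'n \<Rightarrow> (nat \<Rightarrow> 'n \<Rightarrow> real \<Rightarrow> real) \<Rightarrow> (nat \<Rightarrow> nat \<Rightarrow> real^'n^'m) \<Rightarrow>
   (nat \<Rightarrow> real^'m) \<Rightarrow> (nat \<Rightarrow> real^'n) \<Rightarrow> nat \<Rightarrow> real^'m" where
  "fh_input F phi G d ws k = d k + (\<Sum>j<k. G k j *v phi_vec phi j (F *v ws j))"

text \<open>Block k of x-bar (predicted state) under the policy, from initial state x.\<close>
primrec fh_state ::
  "real^'n^'n \<Rightarrow> real^'m^'n \<Rightarrow> real^'n^'n \<Rightarrow> real^'n \<Rightarrow> (nat \<Rightarrow> 'n \<Rightarrow> real \<Rightarrow> real) \<Rightarrow>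
   (nat \<Rightarrow> nat \<Rightarrow> real^'n^'m) \<Rightarrow> (nat \<Rightarrow> real^'m) \<Rightarrow> real^'n \<Rightarrow> (nat \<Rightarrow> real^'n) \<Rightarrow> nat \<Rightarrow> real^'n"
where
  "fh_state A B F r phi G d x ws 0 = x"
| "fh_state A B F r phi G d x ws (Suc k) =
     A *v fh_state A B F r phi G d x ws k + B *v fh_input F phi G d ws k + F *v ws k + r"

text \<open>Finite-horizon cost E_x[x-bar' Q-bar x-bar + u-bar' R-bar u-bar], the noise blocks
  w_0..w_{N-1} being i.i.d. with law D.\<close>
definition fh_cost ::
  "real^'n^'n \<Rightarrow> real^'m^'n \<Rightarrow> real^'n^'n \<Rightarrow> real^'n \<Rightarrow> (nat \<Rightarrow> real^'n^'n) \<Rightarrow> (nat \<Rightarrow> real^'m^'m) \<Rightarrow>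
   (nat \<Rightarrow> 'n \<Rightarrow> real \<Rightarrow> real) \<Rightarrow> nat \<Rightarrow> (real^'n) measure \<Rightarrow> real^'n \<Rightarrow>
   (nat \<Rightarrow> nat \<Rightarrow> real^'n^'m) \<Rightarrow> (nat \<Rightarrow> real^'m) \<Rightarrow> ennreal" where
  "fh_cost A B F r Q R phi N D x G d =
     (\<integral>\<^sup>+ ws. ennreal
        ((\<Sum>k\<le>N. fh_state A B F r phi G d x ws k \<bullet> (Q k *v fh_state A B F r phi G d x ws k))
       + (\<Sum>k<N. fh_input F phi G d ws k \<bullet> (R k *v fh_input F phi G d ws k)))
      \<partial>(PiM {..<N} (\<lambda>_. D)))"

text \<open>Constraint |d_i| + ||G_i||_1 phi_max <= U_max for every row i of (G-bar, d-bar).\<close>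
definition fh_admissible ::
  "real \<Rightarrow> real \<Rightarrow> nat \<Rightarrow> (nat \<Rightarrow> nat \<Rightarrow> real^'n^'m) \<Rightarrow> (nat \<Rightarrow> real^'m) \<Rightarrow> bool" where
  "fh_admissible phi_max U_max N G d \<longleftrightarrow>
     (\<forall>k<N. \<forall>i. \<bar>d k $ i\<bar> + (\<Sum>j<k. \<Sum>l\<in>UNIV. \<bar>G k j $ i $ l\<bar>) * phi_max \<le> U_max)"

definition fh_optimal ::
  "real^'n^'n \<Rightarrow> real^'m^'n \<Rightarrow> real^'n^'n \<Rightarrow> real^'n \<Rightarrow> (nat \<Rightarrow> real^'n^'n) \<Rightarrow> (nat \<Rightarrow> real^'m^'m) \<Rightarrow>
   (nat \<Rightarrow> 'n \<Rightarrow> real \<Rightarrow> real) \<Rightarrow> real \<Rightarrow> real \<Rightarrow> nat \<Rightarrow> (real^'n) measure \<Rightarrow> real^'n \<Rightarrow>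
   (nat \<Rightarrow> nat \<Rightarrow> real^'n^'m) \<Rightarrow> (nat \<Rightarrow> real^'m) \<Rightarrow> bool" where
  "fh_optimal A B F r Q R phi phi_max U_max N D x G d \<longleftrightarrow>
     fh_admissible phi_max U_max N G d \<and>
     (\<forall>G' d'. fh_admissible phi_max U_max N G' d' \<longrightarrow>
        fh_cost A B F r Q R phi N D x G d \<le> fh_cost A B F r Q R phi N D x G' d')"

text \<open>MPC closed loop x_{t+1} = A x_t + B pol(x_t) + F w_t + r, x_0 given.\<close>
primrec mpc_cl ::
  "real^'n^'n \<Rightarrow> real^'m^'n \<Rightarrow> real^'n^'n \<Rightarrow> real^'n \<Rightarrow> (real^'n \<Rightarrow> real^'m) \<Rightarrow> real^'n \<Rightarrow>
   (nat \<Rightarrow> 'a \<Rightarrow> real^'n) \<Rightarrow> nat \<Rightarrow> 'a \<Rightarrow> real^'n"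
where
  "mpc_cl A B F r pol x0 w 0 \<omega> = x0"
| "mpc_cl A B F r pol x0 w (Suc t) \<omega> =
     A *v mpc_cl A B F r pol x0 w t \<omega> + B *v pol (mpc_cl A B F r pol x0 w t \<omega>) + F *v w t \<omega> + r"

end

theory Submission
  imports Defs "Jordan_Normal_Form.Spectral_Radius"
begin
no_notation Matrix.vec_index (infixl "$" 100)
no_notation Matrix.scalar_prod (infix "\<bullet>" 70)

definition ix :: "'n::finite \<Rightarrow> nat" where
  "ix = (SOME h. bij_betw h UNIV {0..<CARD('n)})"

lemma ix_bij: "bij_betw (ix::'n::finite \<Rightarrow> nat) UNIV {0..<CARD('n)}"
proof -
  have "\<exists>h. bij_betw h (UNIV::'n set) {0..<CARD('n)}"
    using ex_bij_betw_finite_nat[of "UNIV::'n set"] by simp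
  then show ?thesis unfolding ix_def by (rule someI_ex)
qed

definition xi :: "nat \<Rightarrow> 'n::finite" where "xi = inv_into UNIV ix"

lemma xi_ix[simp]: "xi (ix (i::'n::finite)) = i"
  unfolding xi_def by (rule inv_into_f_f[OF bij_betw_imp_inj_on[OF ix_bij]]) simp

lemma ix_xi[simp]: "k < CARD('n::finite) \<Longrightarrow> ix (xi k :: 'n) = k"
proof -
  assume k: "k < CARD('n)"
  have "ix ` (UNIV::'n set) = {0..<CARD('n)}" by (rule bij_betw_imp_surj_on[OF ix_bij])
  then have "k \<in> ix ` (UNIV::'n set)" using k by simp
  then show ?thesis unfolding xi_def by (rule f_inv_into_f)
qed

lemma ix_less[simp]: "ix (i::'n::finite) < CARD('n)"
proof -
  have "ix ` (UNIV::'n set) = {0..<CARD('n)}" by (rule bij_betw_imp_surj_on[OF ix_bij])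
  then show ?thesis by auto
qed

lemma sum_reindex_xi: "(\<Sum>k<CARD('n::finite). g (xi k :: 'n)) = (\<Sum>j\<in>UNIV. g j)"
proof -
  have "(\<Sum>j\<in>UNIV. g j) = (\<Sum>k\<in>{0..<CARD('n)}. g (xi k :: 'n))"
    using sum.reindex_bij_betw[OF ix_bij[where 'n='n], of "\<lambda>k. g (xi k)"] by simp
  then show ?thesis by (simp add: atLeast0LessThan)
qed

definition tomat :: "real^'n^'n \<Rightarrow> complex mat" where
  "tomat X = mat CARD('n) CARD('n) (\<lambda>(i,j). complex_of_real (X $ xi i $ xi j))"

definition tovec :: "real^'n \<Rightarrow> complex Matrix.vec" where
  "tovec v = Matrix.vec CARD('n) (\<lambda>i. complex_of_real (v $ xi i))"

lemma tomat_carrier[simp]: "tomat (X::real^'n^'n) \<in> carrier_mat CARD('n) CARD('n)"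
  unfolding tomat_def by simp

lemma tovec_carrier[simp]: "tovec (v::real^'n) \<in> carrier_vec CARD('n)"
  unfolding tovec_def by simp

lemma tomat_tovec: fixes X :: "real^'n^'n" shows "tomat X *\<^sub>v tovec v = tovec (X *v v)"
proof (rule eq_vecI)
  show "dim_vec (tomat X *\<^sub>v tovec v) = dim_vec (tovec (X *v v))"
    by (simp add: tomat_def tovec_def)
  fix i assume "i < dim_vec (tovec (X *v v))"
  then have i: "i < CARD('n)" by (simp add: tovec_def)
  have "vec_index (tomat X *\<^sub>v tovec v) i
      = (\<Sum>k<CARD('n). complex_of_real (X $ xi i $ xi k) * complex_of_real (v $ xi k))"
    using i by (simp add: tomat_def tovec_def scalar_prod_def atLeast0LessThan)
  also have "\<dots> = (\<Sum>j\<in>UNIV. complex_of_real (X $ xi i $ j) * complex_of_real (v $ j))"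
    by (rule sum_reindex_xi)
  also have "\<dots> = complex_of_real ((X *v v) $ xi i)"
    by (simp add: matrix_vector_mult_def)
  finally show "vec_index (tomat X *\<^sub>v tovec v) i = vec_index (tovec (X *v v)) i"
    using i by (simp add: tovec_def)
qed

lemma tomat_pow_tovec: fixes X :: "real^'n^'n" shows "tomat X ^\<^sub>m k *\<^sub>v tovec v = tovec (((*v) X ^^ k) v)"
proof (induction k arbitrary: v)
  case 0
  then show ?case by (simp add: tomat_def)
next
  case (Suc k)
  have "tomat X ^\<^sub>m Suc k *\<^sub>v tovec v = (tomat X ^\<^sub>m k * tomat X) *\<^sub>v tovec v" by simp
  also have "\<dots> = tomat X ^\<^sub>m k *\<^sub>v (tomat X *\<^sub>v tovec v)"
    by (rule assoc_mult_mat_vec[OF pow_carrier_mat[OF tomat_carrier] tomat_carrier tovec_carrier])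
  also have "\<dots> = tovec (((*v) X ^^ k) (X *v v))" by (simp add: tomat_tovec Suc)
  also have "\<dots> = tovec (((*v) X ^^ Suc k) v)" by (simp only: funpow_Suc_right comp_def)
  finally show ?case .
qed

lemma tomat_eigen:
  fixes X :: "real^'n^'n"
  assumes v: "v \<in> carrier_vec CARD('n)" and nz: "v \<noteq> 0\<^sub>v CARD('n)"
    and ev: "tomat X *\<^sub>v v = c \<cdot>\<^sub>v v"
  shows "(\<chi> i::'n. vec_index v (ix i)) \<noteq> 0 \<and>
    (\<chi> i j. complex_of_real (X$i$j)) *v (\<chi> i::'n. vec_index v (ix i)) = c *s (\<chi> i::'n. vec_index v (ix i))"
proof
  have "\<exists>k<CARD('n). vec_index v k \<noteq> 0"
  proof (rule ccontr)
    assume "\<not> (\<exists>k<CARD('n). vec_index v k \<noteq> 0)"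
    then have "v = 0\<^sub>v CARD('n)" using v by (intro eq_vecI) auto
    with nz show False by simp
  qed
  then obtain k where k: "k < CARD('n)" "vec_index v k \<noteq> 0" by blast
  show "(\<chi> i::'n. vec_index v (ix i)) \<noteq> 0"
  proof
    assume "(\<chi> i::'n. vec_index v (ix i)) = 0"
    then have "vec_index v (ix (xi k :: 'n)) = 0" by (simp add: Finite_Cartesian_Product.vec_eq_iff)
    moreover have "ix (xi k :: 'n) = k" using k(1) by (rule ix_xi)
    ultimately show False using k(2) by simp
  qed
  show "(\<chi> i j. complex_of_real (X$i$j)) *v (\<chi> i::'n. vec_index v (ix i)) = c *s (\<chi> i::'n. vec_index v (ix i))"
  proof (rule Finite_Cartesian_Product.vec_eq_iff[THEN iffD2], rule allI)
    fix i :: 'n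
    have "((\<chi> i j. complex_of_real (X$i$j)) *v (\<chi> i::'n. vec_index v (ix i))) $ i
        = (\<Sum>j\<in>UNIV. complex_of_real (X $ i $ j) * vec_index v (ix j))"
      by (simp add: matrix_vector_mult_def)
    also have "\<dots> = (\<Sum>k<CARD('n). complex_of_real (X $ i $ xi k) * vec_index v (ix (xi k :: 'n)))"
      by (rule sum_reindex_xi[symmetric])
    also have "\<dots> = (\<Sum>k<CARD('n). complex_of_real (X $ i $ xi k) * vec_index v k)"
      by (rule sum.cong) auto
    also have "\<dots> = vec_index (tomat X *\<^sub>v v) (ix i)"
      using v by (simp add: tomat_def scalar_prod_def atLeast0LessThan)
    also have "\<dots> = c * vec_index v (ix i)"
      using ev v by simp
    also have "\<dots> = (c *s (\<chi> i::'n. vec_index v (ix i))) $ i" by simp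
    finally show "((\<chi> i j. complex_of_real (X$i$j)) *v (\<chi> i::'n. vec_index v (ix i))) $ i
        = (c *s (\<chi> i::'n. vec_index v (ix i))) $ i" .
  qed
qed

lemma tomat_scale:
  fixes X :: "real^'n^'n"
  assumes v: "v \<in> carrier_vec CARD('n)"
  shows "tomat (a *\<^sub>R X) *\<^sub>v v = complex_of_real a \<cdot>\<^sub>v (tomat X *\<^sub>v v)"
  using v by (intro eq_vecI) (auto simp: tomat_def scalar_prod_def sum_distrib_left mult.assoc)


lemma funpow_scale:
  fixes A :: "real^'n^'n"
  assumes "r \<noteq> 0"
  shows "((*v) A ^^ k) v = r^k *\<^sub>R ((*v) ((1/r) *\<^sub>R A) ^^ k) v"
proof (induction k)
  case 0
  then show ?case by simp
next
  case (Suc k)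
  have AA: "A = r *\<^sub>R ((1/r) *\<^sub>R A)" using assms by simp
  have "((*v) A ^^ Suc k) v = A *v (((*v) A ^^ k) v)" by simp
  also have "\<dots> = A *v (r^k *\<^sub>R ((*v) ((1/r) *\<^sub>R A) ^^ k) v)" using Suc by simp
  also have "\<dots> = r^k *\<^sub>R (A *v (((*v) ((1/r) *\<^sub>R A) ^^ k) v))" by (simp add: matrix_vector_mult_scaleR)
  also have "\<dots> = r^k *\<^sub>R ((r *\<^sub>R ((1/r) *\<^sub>R A)) *v (((*v) ((1/r) *\<^sub>R A) ^^ k) v))" using AA by simp
  also have "\<dots> = r^k *\<^sub>R (r *\<^sub>R (((1/r) *\<^sub>R A) *v (((*v) ((1/r) *\<^sub>R A) ^^ k) v)))"
    by (simp only: matrix_scaleR_vector_ac[symmetric] matrix_vector_mult_scaleR)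
  also have "\<dots> = r^Suc k *\<^sub>R ((*v) ((1/r) *\<^sub>R A) ^^ Suc k) v" by simp
  finally show ?case .
qed

lemma schur_decay:
  fixes A :: "real^'n^'n"
  assumes "schur_stable A"
  shows "\<exists>C \<rho>. 0 \<le> C \<and> 0 < \<rho> \<and> \<rho> < 1 \<and> (\<forall>k v. norm (((*v) A ^^ k) v) \<le> C * \<rho>^k * norm v)"
proof -
  define n where "n = CARD('n)"
  define Mc where "Mc = tomat A"
  have Mc: "Mc \<in> carrier_mat n n" by (simp add: Mc_def n_def)
  have n0: "n > 0" by (simp add: n_def)
  have eig: "cmod c < 1" if "c \<in> spectrum Mc" for c
  proof -
    from that obtain v where v: "v \<in> carrier_vec n" "v \<noteq> 0\<^sub>v n" "Mc *\<^sub>v v = c \<cdot>\<^sub>v v"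
      unfolding spectrum_def eigenvalue_def eigenvector_def using Mc by auto
    from tomat_eigen[where v=v and X=A and c=c] v show ?thesis using assms unfolding schur_stable_def Mc_def n_def by blast
  qed
  define s where "s = spectral_radius Mc"
  have "s \<in> norm ` spectrum Mc" using spectral_radius_mem_max(1)[OF Mc n0] s_def by simp
  then have s1: "s < 1" and s0: "0 \<le> s" using eig by auto
  define \<rho> where "\<rho> = (s+1)/2"
  have \<rho>: "0 < \<rho>" "\<rho> < 1" "s < \<rho>" using s1 s0 by (auto simp: \<rho>_def)
  define A' where "A' = (1/\<rho>) *\<^sub>R A"
  define M' where "M' = tomat A'"
  have M': "M' \<in> carrier_mat n n" by (simp add: M'_def n_def)
  have eig': "cmod c < 1" if "c \<in> spectrum M'" for c
  proof -
    from that obtain v where v: "v \<in> carrier_vec n" "v \<noteq> 0\<^sub>v n" "M' *\<^sub>v v = c \<cdot>\<^sub>v v"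
      unfolding spectrum_def eigenvalue_def eigenvector_def using M' by auto
    have sc: "M' *\<^sub>v v = complex_of_real (1/\<rho>) \<cdot>\<^sub>v (Mc *\<^sub>v v)"
      unfolding M'_def A'_def Mc_def using v(1) n_def by (simp add: tomat_scale)
    have "Mc *\<^sub>v v = (complex_of_real \<rho> * c) \<cdot>\<^sub>v v"
    proof (rule eq_vecI)
      show "dim_vec (Mc *\<^sub>v v) = dim_vec ((complex_of_real \<rho> * c) \<cdot>\<^sub>v v)" using Mc v by simp
      fix i assume "i < dim_vec ((complex_of_real \<rho> * c) \<cdot>\<^sub>v v)"
      then have i: "i < n" using v by simp
      have "vec_index (M' *\<^sub>v v) i = vec_index (c \<cdot>\<^sub>v v) i" using v(3) by simp
      then have "complex_of_real (1/\<rho>) * vec_index (Mc *\<^sub>v v) i = c * vec_index v i"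
        unfolding sc using i Mc v by simp
      then show "vec_index (Mc *\<^sub>v v) i = vec_index ((complex_of_real \<rho> * c) \<cdot>\<^sub>v v) i"
        using i v \<rho>(1) by (simp add: field_simps)
    qed
    then have "complex_of_real \<rho> * c \<in> spectrum Mc" using v Mc
      unfolding spectrum_def eigenvalue_def eigenvector_def by auto
    then have "cmod (complex_of_real \<rho> * c) \<le> s" using spectral_radius_mem_max(2)[OF Mc n0] s_def by auto
    then have le: "\<rho> * cmod c \<le> s" using \<rho> by (simp add: norm_mult)
    show ?thesis
    proof (rule ccontr)
      assume "\<not> cmod c < 1"
      then have "\<rho> * 1 \<le> \<rho> * cmod c" using \<rho>(1) by (intro mult_left_mono) auto
      then show False using le \<rho> by linarith
    qed
  qed
  have "spectral_radius M' \<in> norm ` spectrum M'" using spectral_radius_mem_max(1)[OF M' n0] by simp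
  then have "spectral_radius M' < 1" using eig' by auto
  from spectral_radius_jnf_norm_bound_less_1_upper_triangular[OF M' this]
  obtain c0 where c0: "\<And>k. norm_bound (M' ^\<^sub>m k) c0" by auto
  have P: "M' ^\<^sub>m k \<in> carrier_mat n n" for k using M' by (rule pow_carrier_mat)
  have c0e: "cmod (vec_index (row (M' ^\<^sub>m k) i) l) \<le> c0" if "i < n" "l < n" for k i l
    using c0[of k] P[of k] that M' unfolding norm_bound_def by (auto simp: index_row carrier_matD)
  have c00: "0 \<le> c0" using c0e[of 0 0 0] n0 by (meson norm_ge_zero order_trans)
  have comp: "\<bar>((*v) A' ^^ k) v $ j\<bar> \<le> n * c0 * norm v" for k v j
  proof -
    have ij: "ix j < n" by (simp add: n_def)
    have "complex_of_real (((*v) A' ^^ k) v $ j) = vec_index (tovec (((*v) A' ^^ k) v)) (ix j)"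
      using ij by (simp add: tovec_def n_def)
    also have "\<dots> = vec_index (M' ^\<^sub>m k *\<^sub>v tovec v) (ix j)" by (simp add: M'_def tomat_pow_tovec)
    also have "\<dots> = (\<Sum>l<n. vec_index (row (M' ^\<^sub>m k) (ix j)) l * complex_of_real (v $ xi l))"
      using P[of k] ij by (subst index_mult_mat_vec) (auto simp: tovec_def scalar_prod_def n_def atLeast0LessThan carrier_matD)
    finally have eq: "complex_of_real (((*v) A' ^^ k) v $ j) = \<dots>" .
    have "\<bar>((*v) A' ^^ k) v $ j\<bar> = cmod (complex_of_real (((*v) A' ^^ k) v $ j))" by simp
    also have "\<dots> \<le> (\<Sum>l<n. cmod (vec_index (row (M' ^\<^sub>m k) (ix j)) l * complex_of_real (v $ xi l)))"
      unfolding eq by (rule norm_sum)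
    also have "\<dots> \<le> (\<Sum>l<n. c0 * norm v)"
    proof (rule sum_mono)
      fix l assume "l \<in> {..<n}"
      then have "cmod (vec_index (row (M' ^\<^sub>m k) (ix j)) l) \<le> c0" using c0e ij by auto
      moreover have "\<bar>v $ xi l\<bar> \<le> norm v" by (rule component_le_norm_cart)
      ultimately show "cmod (vec_index (row (M' ^\<^sub>m k) (ix j)) l * complex_of_real (v $ xi l)) \<le> c0 * norm v"
        by (simp add: norm_mult mult_mono c00)
    qed
    also have "\<dots> = n * c0 * norm v" by simp
    finally show ?thesis .
  qed
  have bnd: "norm (((*v) A' ^^ k) v) \<le> (n * (n * c0)) * norm v" for k v
  proof -
    have "norm (((*v) A' ^^ k) v) \<le> (\<Sum>j\<in>UNIV. \<bar>((*v) A' ^^ k) v $ j\<bar>)" by (rule norm_le_l1_cart)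
    also have "\<dots> \<le> (\<Sum>j\<in>(UNIV::'n set). n * c0 * norm v)" by (rule sum_mono) (rule comp)
    also have "\<dots> = (n * (n * c0)) * norm v" by (simp add: n_def)
    finally show ?thesis .
  qed
  show ?thesis
  proof (intro exI conjI allI)
    show "0 \<le> real n * (real n * c0)" using c00 by simp
    show "0 < \<rho>" "\<rho> < 1" using \<rho> by auto
    fix k v
    have "norm (((*v) A ^^ k) v) = \<rho>^k * norm (((*v) A' ^^ k) v)"
      unfolding A'_def using funpow_scale[where r=\<rho> and A=A and k=k and v=v] \<rho>(1) by simp
    also have "\<dots> \<le> \<rho>^k * ((n * (n * c0)) * norm v)" using bnd \<rho>(1) by (simp add: mult_left_mono)
    finally show "norm (((*v) A ^^ k) v) \<le> real n * (real n * c0) * \<rho> ^ k * norm v"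
      by (simp add: algebra_simps)
  qed
qed



lemma lin_rec:
  fixes A :: "real^'n^'n" and x b :: "nat \<Rightarrow> real^'n"
  assumes rec: "\<And>t. x (Suc t) = A *v x t + b t"
  shows "x t = ((*v) A ^^ t) (x 0) + (\<Sum>s<t. ((*v) A ^^ (t - Suc s)) (b s))"
proof (induction t)
  case 0
  then show ?case by simp
next
  case (Suc t)
  have "x (Suc t) = A *v (((*v) A ^^ t) (x 0) + (\<Sum>s<t. ((*v) A ^^ (t - Suc s)) (b s))) + b t"
    using rec Suc by simp
  also have "\<dots> = ((*v) A ^^ Suc t) (x 0) + (\<Sum>s<t. ((*v) A ^^ (Suc t - Suc s)) (b s)) + b t"
  proof -
    have "(\<Sum>s<t. A *v ((*v) A ^^ (t - Suc s)) (b s)) = (\<Sum>s<t. ((*v) A ^^ (Suc t - Suc s)) (b s))"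
    proof (rule sum.cong)
      fix s assume "s \<in> {..<t}"
      then have "Suc t - Suc s = Suc (t - Suc s)" by auto
      then show "A *v ((*v) A ^^ (t - Suc s)) (b s) = ((*v) A ^^ (Suc t - Suc s)) (b s)" by simp
    qed simp
    then show ?thesis by (simp add: matrix_vector_right_distrib vec.sum)
  qed
  also have "\<dots> = ((*v) A ^^ Suc t) (x 0) + (\<Sum>s<Suc t. ((*v) A ^^ (Suc t - Suc s)) (b s))"
    by (simp add: add.assoc)
  finally show ?case .
qed

lemma geom_le:
  fixes \<rho> :: real
  assumes "0 \<le> \<rho>" "\<rho> < 1"
  shows "(\<Sum>s<t. \<rho>^(t - Suc s)) \<le> 1/(1-\<rho>)"
proof -
  have "(\<Sum>s<t. \<rho>^(t - Suc s)) = (\<Sum>i<t. \<rho>^i)" by (rule sum.nat_diff_reindex)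
  also have "\<dots> = (1 - \<rho>^t)/(1-\<rho>)" using assms by (simp add: sum_gp_strict)
  also have "\<dots> \<le> 1/(1-\<rho>)" using assms by (simp add: divide_right_mono)
  finally show ?thesis .
qed

lemma sq_sum_le: "(p + q)\<^sup>2 \<le> 2 * p\<^sup>2 + 2 * (q::real)\<^sup>2"
proof -
  have "(p + q)\<^sup>2 = 2 * p\<^sup>2 + 2 * q\<^sup>2 - (p - q)\<^sup>2" by (simp add: power2_eq_square algebra_simps)
  moreover have "0 \<le> (p - q)\<^sup>2" by simp
  ultimately show ?thesis by linarith
qed

lemma cs_weighted:
  fixes a y :: "nat \<Rightarrow> real"
  assumes "\<And>s. 0 \<le> a s"
  shows "(\<Sum>s\<in>I. a s * y s)\<^sup>2 \<le> (\<Sum>s\<in>I. a s) * (\<Sum>s\<in>I. a s * (y s)\<^sup>2)"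
proof -
  have "(\<Sum>s\<in>I. sqrt (a s) * (sqrt (a s) * y s))\<^sup>2
      \<le> (\<Sum>s\<in>I. (sqrt (a s))\<^sup>2) * (\<Sum>s\<in>I. (sqrt (a s) * y s)\<^sup>2)"
    by (rule Cauchy_Schwarz_ineq_sum)
  moreover have "\<And>s. sqrt (a s) * (sqrt (a s) * y s) = a s * y s"
    using assms by (simp add: mult.assoc[symmetric])
  moreover have "\<And>s. (sqrt (a s))\<^sup>2 = a s" using assms by simp
  moreover have "\<And>s. (sqrt (a s) * y s)\<^sup>2 = a s * (y s)\<^sup>2"
    using assms by (simp add: power_mult_distrib)
  ultimately show ?thesis by simp
qed

theorem proposition3:
  fixes M :: "'a measure"
    and A :: "real^'n^'n" and B :: "real^'m^'n" and F :: "real^'n^'n" and r :: "real^'n"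
    and x0 :: "real^'n"
    and w :: "nat \<Rightarrow> 'a \<Rightarrow> real^'n"
    and U_max phi_max :: real and N :: nat
    and Q :: "nat \<Rightarrow> real^'n^'n" and R :: "nat \<Rightarrow> real^'m^'m"
    and phi :: "nat \<Rightarrow> 'n \<Rightarrow> real \<Rightarrow> real"
    and opt :: "real^'n \<Rightarrow> (nat \<Rightarrow> nat \<Rightarrow> real^'n^'m) \<times> (nat \<Rightarrow> real^'m)"
  assumes "prob_space M"
    and "prob_space.indep_vars M (\<lambda>_. borel) w UNIV"
    and "\<forall>t. distr M borel (w t) = distr M borel (w 0)"
    and "integrable M (\<lambda>\<omega>. (norm (w 0 \<omega>))\<^sup>2)"
    and "U_max > 0" and "0 < phi_max" and "phi_max \<le> U_max"
    and "N \<ge> 1"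
    and "\<forall>k\<le>N. sym_pos_def (Q k)" and "\<forall>k<N. sym_pos_def (R k)"
    and "\<forall>i<N. \<forall>j s. \<bar>phi i j s\<bar> \<le> phi_max"
    and "schur_stable A"
    and "\<forall>i<N. \<forall>j. (\<integral>y. phi i j ((F *v y) $ j) \<partial>(distr M borel (w 0))) = 0"
    and "\<forall>x. fh_optimal A B F r Q R phi phi_max U_max N (distr M borel (w 0)) x
                (fst (opt x)) (snd (opt x))"
  shows "(SUP t. \<integral>\<^sup>+ \<omega>. ennreal ((norm (mpc_cl A B F r (\<lambda>x. snd (opt x) 0) x0 w t \<omega>))\<^sup>2) \<partial>M)
           < \<infinity>"
proof -
  note pM = assms(1) and indep = assms(2) and dist = assms(3) and intw = assms(4)
  interpret prob_space M by (rule pM)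
  obtain C \<rho> where C: "0 \<le> C" and \<rho>: "0 < \<rho>" "\<rho> < 1"
    and dec: "\<And>k v. norm (((*v) A ^^ k) v) \<le> C * \<rho>^k * norm v"
    using schur_decay[OF assms(12)] by blast
  define pol where "pol = (\<lambda>x. snd (opt x) 0)"
  have polc: "\<bar>pol x $ i\<bar> \<le> U_max" for x i
  proof -
    have "fh_admissible phi_max U_max N (fst (opt x)) (snd (opt x))"
      using assms(14) unfolding fh_optimal_def by blast
    then have "\<bar>snd (opt x) 0 $ i\<bar> + (\<Sum>j<0. \<Sum>l\<in>UNIV. \<bar>fst (opt x) 0 j $ i $ l\<bar>) * phi_max \<le> U_max"
      using assms(8) unfolding fh_admissible_def by auto
    then show ?thesis by (simp add: pol_def)
  qed
  have poln: "norm (pol x) \<le> CARD('m) * U_max" for x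
  proof -
    have "norm (pol x) \<le> (\<Sum>i\<in>UNIV. \<bar>pol x $ i\<bar>)" by (rule norm_le_l1_cart)
    also have "\<dots> \<le> (\<Sum>i\<in>(UNIV::'m set). U_max)" by (rule sum_mono) (rule polc)
    finally show ?thesis by simp
  qed
  obtain KB where KB: "KB > 0" "\<And>u. norm (B *v u) \<le> norm u * KB"
    using bounded_linear.pos_bounded[OF matrix_vector_mul_bounded_linear[of B]] by blast
  obtain KF where KF: "KF > 0" "\<And>u. norm (F *v u) \<le> norm u * KF"
    using bounded_linear.pos_bounded[OF matrix_vector_mul_bounded_linear[of F]] by blast
  define \<beta> where "\<beta> = CARD('m) * U_max * KB + norm r"
  have \<beta>0: "0 \<le> \<beta>" using assms(5) KB by (simp add: \<beta>_def)
  define X where "X = (\<lambda>t \<omega>. mpc_cl A B F r pol x0 w t \<omega>)"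
  define b where "b = (\<lambda>t \<omega>. B *v pol (X t \<omega>) + F *v w t \<omega> + r)"
  have rec: "X (Suc t) \<omega> = A *v X t \<omega> + b t \<omega>" for t \<omega>
    by (simp add: X_def b_def add.assoc)
  have bn: "norm (b t \<omega>) \<le> \<beta> + KF * norm (w t \<omega>)" for t \<omega>
  proof -
    have "norm (b t \<omega>) \<le> norm (B *v pol (X t \<omega>)) + norm (F *v w t \<omega>) + norm r"
      unfolding b_def by (meson norm_triangle_ineq norm_triangle_le add_right_mono)
    also have "\<dots> \<le> CARD('m) * U_max * KB + KF * norm (w t \<omega>) + norm r"
    proof -
      have "norm (B *v pol (X t \<omega>)) \<le> norm (pol (X t \<omega>)) * KB" by (rule KB(2))
      also have "\<dots> \<le> CARD('m) * U_max * KB" using poln KB(1) by (simp add: mult_right_mono)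
      finally show ?thesis using KF(2)[of "w t \<omega>"] by (simp add: mult.commute)
    qed
    finally show ?thesis by (simp add: \<beta>_def)
  qed
  define a where "a = (\<lambda>t s. \<rho>^(t - Suc s))"
  have a0: "0 \<le> a t s" for t s using \<rho> by (simp add: a_def)
  define S where "S = 1/(1-\<rho>)"
  have S0: "0 \<le> S" using \<rho> by (simp add: S_def)
  have sumS: "(\<Sum>s<t. a t s) \<le> S" for t
    unfolding a_def S_def using geom_le[of \<rho> t] \<rho> by simp
  define P where "P = C * norm x0 + C * \<beta> * S"
  define G where "G = C * KF"
  have P0: "0 \<le> P" using C \<beta>0 S0 by (simp add: P_def)
  have G0: "0 \<le> G" using C KF by (simp add: G_def)
  have Xn: "norm (X t \<omega>) \<le> P + G * (\<Sum>s<t. a t s * norm (w s \<omega>))" for t \<omega>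
  proof -
    have eq: "X t \<omega> = ((*v) A ^^ t) (X 0 \<omega>) + (\<Sum>s<t. ((*v) A ^^ (t - Suc s)) (b s \<omega>))"
      by (rule lin_rec[where x="\<lambda>t. X t \<omega>"]) (rule rec)
    have "norm (X t \<omega>) \<le> norm (((*v) A ^^ t) (X 0 \<omega>)) + (\<Sum>s<t. norm (((*v) A ^^ (t - Suc s)) (b s \<omega>)))"
      unfolding eq by (rule order_trans[OF norm_triangle_ineq add_left_mono[OF norm_sum]])
    also have "\<dots> \<le> C * norm x0 + (\<Sum>s<t. C * a t s * (\<beta> + KF * norm (w s \<omega>)))"
    proof (rule add_mono)
      have "norm (((*v) A ^^ t) (X 0 \<omega>)) \<le> C * \<rho>^t * norm x0" using dec[of t "X 0 \<omega>"] by (simp add: X_def)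
      also have "\<dots> \<le> C * 1 * norm x0"
        using C \<rho> by (intro mult_right_mono mult_left_mono) (auto simp: power_le_one)
      finally show "norm (((*v) A ^^ t) (X 0 \<omega>)) \<le> C * norm x0" by simp
      show "(\<Sum>s<t. norm (((*v) A ^^ (t - Suc s)) (b s \<omega>))) \<le> (\<Sum>s<t. C * a t s * (\<beta> + KF * norm (w s \<omega>)))"
      proof (rule sum_mono)
        fix s
        have "norm (((*v) A ^^ (t - Suc s)) (b s \<omega>)) \<le> C * a t s * norm (b s \<omega>)"
          using dec unfolding a_def by simp
        also have "\<dots> \<le> C * a t s * (\<beta> + KF * norm (w s \<omega>))"
          using bn C a0 by (intro mult_left_mono) auto
        finally show "norm (((*v) A ^^ (t - Suc s)) (b s \<omega>)) \<le> C * a t s * (\<beta> + KF * norm (w s \<omega>))" .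
      qed
    qed
    also have "\<dots> = C * norm x0 + C * \<beta> * (\<Sum>s<t. a t s) + G * (\<Sum>s<t. a t s * norm (w s \<omega>))"
      by (simp add: G_def algebra_simps sum.distrib sum_distrib_left)
    also have "\<dots> \<le> P + G * (\<Sum>s<t. a t s * norm (w s \<omega>))"
    proof -
      have "C * \<beta> * (\<Sum>s<t. a t s) \<le> C * \<beta> * S"
        by (rule mult_left_mono[OF sumS]) (use C \<beta>0 in simp)
      then show ?thesis unfolding P_def by linarith
    qed
    finally show ?thesis .
  qed
  define g where "g = (\<lambda>t \<omega>. 2 * P\<^sup>2 + 2 * G\<^sup>2 * S * (\<Sum>s<t. a t s * (norm (w s \<omega>))\<^sup>2))"
  have Xg: "(norm (X t \<omega>))\<^sup>2 \<le> g t \<omega>" for t \<omega>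
  proof -
    define Y where "Y = (\<Sum>s<t. a t s * norm (w s \<omega>))"
    define Q where "Q = (\<Sum>s<t. a t s * (norm (w s \<omega>))\<^sup>2)"
    have Y0: "0 \<le> Y" unfolding Y_def using a0 by (simp add: sum_nonneg)
    have Q0: "0 \<le> Q" unfolding Q_def using a0 by (simp add: sum_nonneg)
    have h0: "norm (X t \<omega>) \<le> P + G * Y" using Xn[of t \<omega>] by (simp add: Y_def)
    have h1: "(norm (X t \<omega>))\<^sup>2 \<le> (P + G * Y)\<^sup>2"
      by (rule power_mono[OF h0 norm_ge_zero])
    have h2: "(P + G * Y)\<^sup>2 \<le> 2 * P\<^sup>2 + 2 * G\<^sup>2 * Y\<^sup>2"
      using sq_sum_le[of P "G * Y"] by (simp add: power_mult_distrib)
    have h3: "Y\<^sup>2 \<le> (\<Sum>s<t. a t s) * Q"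
      unfolding Y_def Q_def by (rule cs_weighted) (rule a0)
    have h4: "(\<Sum>s<t. a t s) * Q \<le> S * Q"
      by (rule mult_right_mono[OF sumS Q0])
    have h5: "G\<^sup>2 * Y\<^sup>2 \<le> G\<^sup>2 * (S * Q)"
      by (rule mult_left_mono[OF order_trans[OF h3 h4]]) simp
    have g: "g t \<omega> = 2 * P\<^sup>2 + 2 * (G\<^sup>2 * (S * Q))"
      by (simp add: g_def Q_def mult.assoc)
    show ?thesis using h1 h2 h5 g by linarith
  qed
  have wm: "w s \<in> borel_measurable M" for s
    using indep unfolding indep_vars_def by auto
  note wm[measurable]
  have wm2: "(\<lambda>\<omega>. ennreal ((norm (w s \<omega>))\<^sup>2)) \<in> borel_measurable M" for s
    by measurable
  define E where "E = (\<integral>\<omega>. (norm (w 0 \<omega>))\<^sup>2 \<partial>M)"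
  have E0: "0 \<le> E" unfolding E_def by simp
  have Ew: "(\<integral>\<^sup>+ \<omega>. ennreal ((norm (w s \<omega>))\<^sup>2) \<partial>M) = ennreal E" for s
  proof -
    have "(\<integral>\<^sup>+ \<omega>. ennreal ((norm (w s \<omega>))\<^sup>2) \<partial>M) = (\<integral>\<^sup>+ y. ennreal ((norm y)\<^sup>2) \<partial>distr M borel (w s))"
      by (rule nn_integral_distr[symmetric]) (auto intro: wm)
    also have "\<dots> = (\<integral>\<^sup>+ y. ennreal ((norm y)\<^sup>2) \<partial>distr M borel (w 0))" by (simp only: dist[rule_format, of s])
    also have "\<dots> = (\<integral>\<^sup>+ \<omega>. ennreal ((norm (w 0 \<omega>))\<^sup>2) \<partial>M)"
      by (rule nn_integral_distr) (auto intro: wm)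
    also have "\<dots> = ennreal E" unfolding E_def
      by (rule nn_integral_eq_integral[OF intw]) simp
    finally show ?thesis .
  qed
  define K where "K = 2 * P\<^sup>2 + 2 * G\<^sup>2 * S * S * E"
  have Kb: "(\<integral>\<^sup>+ \<omega>. ennreal ((norm (X t \<omega>))\<^sup>2) \<partial>M) \<le> ennreal K" for t
  proof -
    have "(\<integral>\<^sup>+ \<omega>. ennreal ((norm (X t \<omega>))\<^sup>2) \<partial>M) \<le> (\<integral>\<^sup>+ \<omega>. ennreal (g t \<omega>) \<partial>M)"
      by (rule nn_integral_mono) (simp add: Xg ennreal_leI)
    also have "(\<integral>\<^sup>+ \<omega>. ennreal (g t \<omega>) \<partial>M)
        = (\<integral>\<^sup>+ \<omega>. ennreal (2 * P\<^sup>2) + (\<Sum>s<t. ennreal (2 * G\<^sup>2 * S * a t s) * ennreal ((norm (w s \<omega>))\<^sup>2)) \<partial>M)"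
    proof (rule nn_integral_cong)
      fix \<omega>
      have "(\<Sum>s<t. ennreal (2 * G\<^sup>2 * S * a t s) * ennreal ((norm (w s \<omega>))\<^sup>2))
          = (\<Sum>s<t. ennreal (2 * G\<^sup>2 * S * a t s * (norm (w s \<omega>))\<^sup>2))"
      proof (rule sum.cong[OF refl])
        fix s
        have "0 \<le> 2 * G\<^sup>2 * S * a t s" using S0 a0[of t s] by simp
        then show "ennreal (2 * G\<^sup>2 * S * a t s) * ennreal ((norm (w s \<omega>))\<^sup>2)
            = ennreal (2 * G\<^sup>2 * S * a t s * (norm (w s \<omega>))\<^sup>2)"
          by (rule ennreal_mult[symmetric]) simp
      qed
      also have "\<dots> = ennreal (\<Sum>s<t. 2 * G\<^sup>2 * S * a t s * (norm (w s \<omega>))\<^sup>2)"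
        by (rule sum_ennreal) (use S0 a0 in simp)
      finally have e1: "(\<Sum>s<t. ennreal (2 * G\<^sup>2 * S * a t s) * ennreal ((norm (w s \<omega>))\<^sup>2))
          = ennreal (\<Sum>s<t. 2 * G\<^sup>2 * S * a t s * (norm (w s \<omega>))\<^sup>2)" .
      have greal: "g t \<omega> = 2 * P\<^sup>2 + (\<Sum>s<t. 2 * G\<^sup>2 * S * a t s * (norm (w s \<omega>))\<^sup>2)"
        by (simp add: g_def sum_distrib_left mult.assoc)
      have "ennreal (g t \<omega>) = ennreal (2 * P\<^sup>2) + ennreal (\<Sum>s<t. 2 * G\<^sup>2 * S * a t s * (norm (w s \<omega>))\<^sup>2)"
        unfolding greal by (rule ennreal_plus) (use S0 a0 in \<open>auto intro!: sum_nonneg\<close>)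
      then show "ennreal (g t \<omega>) = ennreal (2 * P\<^sup>2) + (\<Sum>s<t. ennreal (2 * G\<^sup>2 * S * a t s) * ennreal ((norm (w s \<omega>))\<^sup>2))"
        unfolding e1 .
    qed
    also have "\<dots> = ennreal (2 * P\<^sup>2) + (\<Sum>s<t. ennreal (2 * G\<^sup>2 * S * a t s) * ennreal E)"
    proof -
      have "(\<integral>\<^sup>+ \<omega>. ennreal (2 * P\<^sup>2) + (\<Sum>s<t. ennreal (2 * G\<^sup>2 * S * a t s) * ennreal ((norm (w s \<omega>))\<^sup>2)) \<partial>M)
          = (\<integral>\<^sup>+ \<omega>. ennreal (2 * P\<^sup>2) \<partial>M) + (\<integral>\<^sup>+ \<omega>. (\<Sum>s<t. ennreal (2 * G\<^sup>2 * S * a t s) * ennreal ((norm (w s \<omega>))\<^sup>2)) \<partial>M)"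
        by (rule nn_integral_add) measurable
      also have "(\<integral>\<^sup>+ \<omega>. ennreal (2 * P\<^sup>2) \<partial>M) = ennreal (2 * P\<^sup>2)"
        by (simp add: emeasure_space_1)
      also have "(\<integral>\<^sup>+ \<omega>. (\<Sum>s<t. ennreal (2 * G\<^sup>2 * S * a t s) * ennreal ((norm (w s \<omega>))\<^sup>2)) \<partial>M)
          = (\<Sum>s<t. \<integral>\<^sup>+ \<omega>. ennreal (2 * G\<^sup>2 * S * a t s) * ennreal ((norm (w s \<omega>))\<^sup>2) \<partial>M)"
        by (rule nn_integral_sum) measurable
      also have "\<dots> = (\<Sum>s<t. ennreal (2 * G\<^sup>2 * S * a t s) * ennreal E)"
      proof (rule sum.cong[OF refl])
        fix s
        show "(\<integral>\<^sup>+ \<omega>. ennreal (2 * G\<^sup>2 * S * a t s) * ennreal ((norm (w s \<omega>))\<^sup>2) \<partial>M)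
            = ennreal (2 * G\<^sup>2 * S * a t s) * ennreal E"
          using nn_integral_cmult[OF wm2[of s], of "ennreal (2 * G\<^sup>2 * S * a t s)"] Ew[of s] by simp
      qed
      finally show ?thesis .
    qed
    also have "\<dots> = ennreal (2 * P\<^sup>2 + (\<Sum>s<t. 2 * G\<^sup>2 * S * a t s * E))"
    proof -
      have "(\<Sum>s<t. ennreal (2 * G\<^sup>2 * S * a t s) * ennreal E) = (\<Sum>s<t. ennreal (2 * G\<^sup>2 * S * a t s * E))"
      proof (rule sum.cong[OF refl])
        fix s
        have "0 \<le> 2 * G\<^sup>2 * S * a t s" using S0 a0[of t s] by simp
        then show "ennreal (2 * G\<^sup>2 * S * a t s) * ennreal E = ennreal (2 * G\<^sup>2 * S * a t s * E)"
          by (rule ennreal_mult[symmetric]) (rule E0)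
      qed
      also have "\<dots> = ennreal (\<Sum>s<t. 2 * G\<^sup>2 * S * a t s * E)"
        by (rule sum_ennreal) (use S0 a0 E0 in simp)
      finally have e2: "(\<Sum>s<t. ennreal (2 * G\<^sup>2 * S * a t s) * ennreal E) = ennreal (\<Sum>s<t. 2 * G\<^sup>2 * S * a t s * E)" .
      have "ennreal (2 * P\<^sup>2 + (\<Sum>s<t. 2 * G\<^sup>2 * S * a t s * E))
          = ennreal (2 * P\<^sup>2) + ennreal (\<Sum>s<t. 2 * G\<^sup>2 * S * a t s * E)"
        by (rule ennreal_plus) (use S0 a0 E0 in \<open>auto intro!: sum_nonneg\<close>)
      then show ?thesis unfolding e2 by simp
    qed
    also have "\<dots> \<le> ennreal K"
    proof (rule ennreal_leI)
      have "(\<Sum>s<t. 2 * G\<^sup>2 * S * a t s * E) = 2 * G\<^sup>2 * S * E * (\<Sum>s<t. a t s)"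
        unfolding sum_distrib_left by (rule sum.cong) (simp_all add: algebra_simps)
      also have "\<dots> \<le> 2 * G\<^sup>2 * S * E * S"
        using sumS[of t] S0 E0 by (intro mult_left_mono) auto
      finally show "2 * P\<^sup>2 + (\<Sum>s<t. 2 * G\<^sup>2 * S * a t s * E) \<le> K"
        unfolding K_def by (simp add: algebra_simps)
    qed
    finally show ?thesis .
  qed
  have "(SUP t. \<integral>\<^sup>+ \<omega>. ennreal ((norm (X t \<omega>))\<^sup>2) \<partial>M) \<le> ennreal K"
    by (rule SUP_least) (rule Kb)
  then show ?thesis unfolding X_def pol_def infinity_ennreal_def using ennreal_less_top[of K] by (rule le_less_trans)
qed

end
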